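(* Let $(\Omega,\Sigma,\mu)$ be a measure space with $\mu(\Omega)=1$, let $p\ge 1$, let $\chi\in\mathcal W^+_p$, and let $\{\chi_k\}_{k\in\mathbb N}$ be a sequence of normalized Young weights converging to $\chi$ uniformly on compact subsets of $\mathbb R$. Let $f$ be a bounded $\mu$-measurable function. Then $f\in L^\chi(\mu)$ and $f\in L^{\chi_k}(\mu)$ for all $k$, and $$\lim_{k\to\infty}\|f\|_{\chi_k,\mu}=\|f\|_{\chi,\mu}.$$
   Context: A normalized Young weight is a function $\chi:\mathbb R\to[0,\infty]$ that is convex, even, lower semicontinuous, with $\chi(0)=0$ and $1\in\partial\chi(1)$ (here $\partial\chi(l)$ is the set of subgradients of $\chi$ at $l$). For $p\ge1$, $\mathcal W^+_p$ denotes the set of finite-valued normalized Young weights satisfying $l\,\chi'(l)\le p\,\chi(l)$ for all $l>0$ and every subgradient $\chi'(l)\in\partial\chi(l)$. For a normalized Young weight $\chi$, $L^\chi(\mu)$ is the set of measurable $f:\Omega\to[-\infty,\infty]$ such that $\int_\Omega\chi(rf)\,d\mu<\infty$ for some $r>0$, with the norm $\|f\|_{\chi,\mu}=\inf\{r>0:\int_\Omega\chi(f/r)\,d\mu\le\chi(1)\}$. *)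

theory Defs
  imports "HOL-Analysis.Analysis" "HOL-Probability.Probability"
begin

definition subgradients :: "(real \<Rightarrow> ereal) \<Rightarrow> real \<Rightarrow> real set" where
  "subgradients Y l = {c. Y l \<noteq> \<infinity> \<and> Y l \<noteq> -\<infinity> \<and>
      (\<forall>y. Y l + ereal (c * (y - l)) \<le> Y y)}"

definition convex_ereal_fun :: "(real \<Rightarrow> ereal) \<Rightarrow> bool" where
  "convex_ereal_fun Y \<longleftrightarrow>
     (\<forall>x y t. 0 \<le> t \<and> t \<le> 1 \<longrightarrow>
        Y (t * x + (1 - t) * y) \<le> ereal t * Y x + ereal (1 - t) * Y y)"

definition lsc_fun :: "(real \<Rightarrow> ereal) \<Rightarrow> bool" where
  "lsc_fun Y \<longleftrightarrow> (\<forall>c. closed {x. Y x \<le> c})"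

definition normalized_young_weight :: "(real \<Rightarrow> ereal) \<Rightarrow> bool" where
  "normalized_young_weight Y \<longleftrightarrow>
     (\<forall>x. 0 \<le> Y x) \<and> convex_ereal_fun Y \<and> (\<forall>x. Y (-x) = Y x) \<and>
     lsc_fun Y \<and> Y 0 = 0 \<and> 1 \<in> subgradients Y 1"

definition W_plus :: "real \<Rightarrow> (real \<Rightarrow> ereal) set" where
  "W_plus p = {Y. normalized_young_weight Y \<and> (\<forall>x. Y x \<noteq> \<infinity>) \<and>
      (\<forall>l>0. \<forall>c\<in>subgradients Y l. ereal (l * c) \<le> ereal p * Y l)}"

definition in_orlicz :: "(real \<Rightarrow> ereal) \<Rightarrow> 'a measure \<Rightarrow> ('a \<Rightarrow> real) \<Rightarrow> bool" where
  "in_orlicz Y M f \<longleftrightarrow> f \<in> borel_measurable M \<and>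
     (\<exists>r>0. (\<integral>\<^sup>+ x. e2ennreal (Y (r * f x)) \<partial>M) < \<infinity>)"

definition orlicz_norm :: "(real \<Rightarrow> ereal) \<Rightarrow> 'a measure \<Rightarrow> ('a \<Rightarrow> real) \<Rightarrow> real" where
  "orlicz_norm Y M f = Inf {r. r > 0 \<and>
     (\<integral>\<^sup>+ x. e2ennreal (Y (f x / r)) \<partial>M) \<le> e2ennreal (Y 1)}"

definition unif_conv_compact :: "(nat \<Rightarrow> real \<Rightarrow> ereal) \<Rightarrow> (real \<Rightarrow> ereal) \<Rightarrow> bool" where
  "unif_conv_compact Ys Y \<longleftrightarrow>
     (\<forall>K. compact K \<longrightarrow> (\<forall>e>0. \<forall>\<^sub>F k in sequentially. \<forall>x\<in>K.
        \<bar>Ys k x - Y x\<bar> < ereal e))"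

end

theory Submission
  imports Defs
begin

lemma nyw_scale:
  assumes "normalized_young_weight Z" "0 \<le> t" "t \<le> 1"
  shows "Z (t*b) \<le> ereal t * Z b"
proof -
  have "Z (t*b + (1-t)*0) \<le> ereal t * Z b + ereal (1-t) * Z 0"
    using assms unfolding normalized_young_weight_def convex_ereal_fun_def by blast
  thus ?thesis using assms unfolding normalized_young_weight_def by simp
qed

lemma nyw_nonneg: "normalized_young_weight Z \<Longrightarrow> 0 \<le> Z x"
  unfolding normalized_young_weight_def by blast

lemma nyw_mono:
  assumes Z: "normalized_young_weight Z" and "0 \<le> a" "a \<le> b"
  shows "Z a \<le> Z b"
proof (cases "b = 0")
  case True thus ?thesis using assms by simp
next
  case False
  hence b: "b > 0" using assms by simp
  define t where "t = a / b"
  have t: "0 \<le> t" "t \<le> 1" using assms b by (auto simp: t_def field_simps)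
  have "a = t * b" using b by (simp add: t_def)
  hence "Z a \<le> ereal t * Z b" using nyw_scale[OF Z t] by simp
  also have "\<dots> \<le> Z b"
    using nyw_nonneg[OF Z, of b] t
    by (cases "Z b") (auto simp: mult_left_le_one_le)
  finally show ?thesis .
qed

lemma nyw_abs: "normalized_young_weight Z \<Longrightarrow> Z x = Z \<bar>x\<bar>"
  unfolding normalized_young_weight_def by (cases "x \<ge> 0") auto

lemma nyw_mono_abs:
  assumes Z: "normalized_young_weight Z" and "\<bar>a\<bar> \<le> \<bar>b\<bar>"
  shows "Z a \<le> Z b"
  using nyw_abs[OF Z, of a] nyw_abs[OF Z, of b] nyw_mono[OF Z, of "\<bar>a\<bar>" "\<bar>b\<bar>"] assms by simp

lemma nyw_one_fin:
  assumes Z: "normalized_young_weight Z"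
  shows "Z 1 = ereal (real_of_ereal (Z 1))" "0 \<le> real_of_ereal (Z 1)"
proof -
  have "Z 1 \<noteq> \<infinity>" "Z 1 \<noteq> -\<infinity>" using Z unfolding normalized_young_weight_def subgradients_def by auto
  thus "Z 1 = ereal (real_of_ereal (Z 1))" by (cases "Z 1") auto
  show "0 \<le> real_of_ereal (Z 1)" using nyw_nonneg[OF Z, of 1] by (simp add: real_of_ereal_pos)
qed

lemma nyw_meas:
  assumes Z: "normalized_young_weight Z"
  shows "Z \<in> borel_measurable borel"
proof (rule borel_measurableI_le)
  fix y
  have "closed {x. Z x \<le> y}" using Z unfolding normalized_young_weight_def lsc_fun_def by blast
  thus "{x \<in> space borel. Z x \<le> y} \<in> sets borel" by simp
qed


lemma W_fin:
  assumes "Y \<in> W_plus p"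
  shows "Y x = ereal (real_of_ereal (Y x))" "0 \<le> real_of_ereal (Y x)"
proof -
  have Z: "normalized_young_weight Y" "Y x \<noteq> \<infinity>" using assms unfolding W_plus_def by auto
  have "0 \<le> Y x" using nyw_nonneg[OF Z(1)] .
  thus "Y x = ereal (real_of_ereal (Y x))" "0 \<le> real_of_ereal (Y x)" using Z(2)
    by (cases "Y x"; auto)+
qed

lemma W_convex:
  assumes "Y \<in> W_plus p"
  shows "convex_on UNIV (\<lambda>x. real_of_ereal (Y x))"
proof (rule convex_onI)
  fix t x z :: real
  assume t: "0 < t" "t < 1"
  have "Y ((1-t)*x + (1-(1-t))*z) \<le> ereal (1-t) * Y x + ereal (1-(1-t)) * Y z"
  proof -
    have cv: "convex_ereal_fun Y" using assms unfolding W_plus_def normalized_young_weight_def by blast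
    show ?thesis using cv[unfolded convex_ereal_fun_def, rule_format, of "1-t" x z] t by simp
  qed
  define y where "y = (\<lambda>x. real_of_ereal (Y x))"
  have e: "\<And>u. Y u = ereal (y u)" using W_fin(1)[OF assms] unfolding y_def by blast
  from \<open>Y ((1-t)*x + (1-(1-t))*z) \<le> _\<close>
  have "ereal (y ((1-t)*x + t*z)) \<le> ereal (1-t) * ereal (y x) + ereal t * ereal (y z)"
    by (simp only: e) simp
  hence "y ((1-t)*x + t*z) \<le> (1-t) * y x + t * y z" by simp
  thus "real_of_ereal (Y ((1 - t) *\<^sub>R x + t *\<^sub>R z)) \<le> (1 - t) * real_of_ereal (Y x) + t * real_of_ereal (Y z)"
    unfolding y_def by simp
qed auto

lemma subgrad_exists:
  fixes g :: "real \<Rightarrow> real"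
  assumes g: "convex_on UNIV g"
  shows "\<exists>c. (\<forall>w. g l + c*(w-l) \<le> g w) \<and> (\<forall>w<l. (g l - g w)/(l-w) \<le> c)"
proof -
  define S where "S = {(g l - g w)/(l-w) | w. w<l}"
  have ne: "S \<noteq> {}" unfolding S_def by (auto intro!: exI[of _ "l-1"])
  have sl: "(g l - g w)/(l-w) \<le> (g z - g l)/(z-l)" if "w < l" "l < z" for w z
  proof -
    have "(g w - g l) / (w - l) \<le> (g w - g z) / (w - z)"
      "(g w - g z) / (w - z) \<le> (g l - g z) / (l - z)"
      using convex_on_slope_le[OF g, of w z l] that by auto
    moreover have "(g l - g w)/(l-w) = (g w - g l) / (w - l)" "(g z - g l)/(z-l) = (g l - g z) / (l - z)"
      by (simp_all add: divide_simps) (simp_all add: algebra_simps)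
    ultimately show ?thesis by linarith
  qed
  have bdd: "bdd_above S" unfolding S_def bdd_above_def
    using sl[of _ "l+1"] by auto
  define c where "c = Sup S"
  have up: "(g l - g w)/(l-w) \<le> c" if "w < l" for w
    unfolding c_def by (rule cSup_upper[OF _ bdd]) (use that S_def in auto)
  have lo: "c \<le> (g z - g l)/(z-l)" if "l < z" for z
    unfolding c_def by (rule cSup_least[OF ne]) (use that S_def sl in auto)
  have "g l + c*(w-l) \<le> g w" for w
  proof (cases w l rule: linorder_cases)
    case less
    have "(g l - g w) \<le> c * (l - w)" using up[OF less] less by (simp add: divide_le_eq)
    thus ?thesis by (simp add: algebra_simps)
  next
    case equal thus ?thesis by simp
  next
    case greater
    have "c * (w - l) \<le> g w - g l" using lo[OF greater] greater by (simp add: le_divide_eq)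
    thus ?thesis by simp
  qed
  thus ?thesis using up by blast
qed

lemma W_one_pos:
  assumes "Y \<in> W_plus p"
  shows "real_of_ereal (Y 1) > 0"
proof -
  have "1 \<in> subgradients Y 1" using assms unfolding W_plus_def normalized_young_weight_def by auto
  moreover have "\<forall>l>0. \<forall>c\<in>subgradients Y l. ereal (l * c) \<le> ereal p * Y l" using assms unfolding W_plus_def by blast
  ultimately have "ereal (1*1) \<le> ereal p * Y 1" by (metis zero_less_one)
  define y where "y = (\<lambda>x. real_of_ereal (Y x))"
  have e: "\<And>u. Y u = ereal (y u)" using W_fin(1)[OF assms] unfolding y_def by blast
  from \<open>ereal (1*1) \<le> ereal p * Y 1\<close> have "ereal 1 \<le> ereal (p * y 1)" by (simp only: e times_ereal.simps(1) mult_1)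
  hence "1 \<le> p * real_of_ereal (Y 1)" unfolding y_def by simp
  moreover have "0 \<le> real_of_ereal (Y 1)" using W_fin[OF assms] by auto
  ultimately show ?thesis by (cases "real_of_ereal (Y 1) = 0") auto
qed

lemma W_step:
  assumes Y: "Y \<in> W_plus p" and p: "p \<ge> 1" and a: "a > 0" and y0: "real_of_ereal (Y a) = 0"
  shows "real_of_ereal (Y (a * (1 + 1/(2*p)))) = 0"
proof -
  define y where "y = (\<lambda>x. real_of_ereal (Y x))"
  define l where "l = a * (1 + 1/(2*p))"
  have pp: "p > 0" using p by simp
  have e: "\<And>u. Y u = ereal (y u)" using W_fin(1)[OF Y] unfolding y_def by blast
  have al: "a < l" using a pp by (simp add: l_def field_simps)
  obtain c where c1: "\<forall>w. y l + c*(w-l) \<le> y w" and c2: "\<forall>w<l. (y l - y w)/(l-w) \<le> c"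
    using subgrad_exists[OF W_convex[OF Y], of l] unfolding y_def by blast
  have "c \<in> subgradients Y l"
    unfolding subgradients_def using c1 by (simp add: e)
  hence "ereal (l * c) \<le> ereal p * Y l" using Y al a unfolding W_plus_def by auto
  hence lc: "l * c \<le> p * y l" by (simp add: e)
  have "y l / (l - a) \<le> c" using c2 al y0 unfolding y_def by auto
  hence "l * (y l / (l - a)) \<le> l * c" using al a by (intro mult_left_mono) auto
  hence "l * (y l / (l - a)) \<le> p * y l" using lc by linarith
  moreover have "l / (l - a) = 2*p + 1" using a pp unfolding l_def by (simp add: field_simps)
  moreover have "l * (y l / (l - a)) = (l / (l - a)) * y l" by simp
  ultimately have "(2*p+1) * y l \<le> p * y l" by simp
  hence "(p+1) * y l \<le> 0" by (simp add: algebra_simps)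
  moreover have "p + 1 > 0" using pp by simp
  ultimately have "y l \<le> 0" by (simp add: mult_le_0_iff)
  moreover have "y l \<ge> 0" unfolding y_def by (rule W_fin(2)[OF Y])
  ultimately have "y l = 0" by linarith
  thus ?thesis unfolding y_def l_def .
qed

lemma W_pos:
  assumes Y: "Y \<in> W_plus p" and p: "p \<ge> 1" and b: "b > 0"
  shows "real_of_ereal (Y b) > 0"
proof (rule ccontr)
  define y where "y = (\<lambda>x. real_of_ereal (Y x))"
  define s where "s = 1 + 1/(2*p)"
  have s: "s > 1" using p by (simp add: s_def)
  assume "\<not> ?thesis"
  hence yb: "y b = 0" using W_fin(2)[OF Y, of b] unfolding y_def by simp
  have ind: "y (b * s^n) = 0" for n
  proof (induction n)
    case 0 thus ?case using yb by simp
  next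
    case (Suc n)
    have "b * s^n > 0" using b s by simp
    from W_step[OF Y p this] Suc show ?case unfolding y_def s_def by (simp add: algebra_simps)
  qed
  obtain n where n: "1/b < s^n" using real_arch_pow[OF s] by blast
  hence "1 \<le> b * s^n" using b by (simp add: field_simps)
  have Z: "normalized_young_weight Y" using Y unfolding W_plus_def by auto
  have e: "\<And>u. Y u = ereal (y u)" using W_fin(1)[OF Y] unfolding y_def by blast
  have "Y 1 \<le> Y (b * s^n)" using nyw_mono[OF Z, of 1] \<open>1 \<le> b * s^n\<close> by simp
  hence "y 1 \<le> y (b * s^n)" by (simp only: e ereal_less_eq)
  moreover have "y 1 > 0" unfolding y_def by (rule W_one_pos[OF Y])
  ultimately show False using ind[of n] by linarith
qed

lemma W_strict:
  assumes Y: "Y \<in> W_plus p" and p: "p \<ge> 1" and ab: "0 \<le> a" "a < b"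
  shows "real_of_ereal (Y a) < real_of_ereal (Y b)"
proof -
  have Z: "normalized_young_weight Y" using Y unfolding W_plus_def by auto
  have b: "b > 0" using ab by simp
  define t where "t = a / b"
  have t: "0 \<le> t" "t < 1" using ab b by (auto simp: t_def field_simps)
  define y where "y = (\<lambda>x. real_of_ereal (Y x))"
  have e: "\<And>u. Y u = ereal (y u)" using W_fin(1)[OF Y] unfolding y_def by blast
  have "Y a \<le> ereal t * Y b" using nyw_scale[OF Z, of t b] t b by (simp add: t_def)
  hence "ereal (y a) \<le> ereal (t * y b)" by (simp only: e times_ereal.simps(1))
  hence "real_of_ereal (Y a) \<le> t * real_of_ereal (Y b)" unfolding y_def by simp
  also have "\<dots> < real_of_ereal (Y b)" using W_pos[OF Y p b] t by simp
  finally show ?thesis .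
qed


lemma ptw_close:
  assumes Z: "normalized_young_weight Z" and Y: "Y \<in> W_plus p" and c: "\<bar>Z x - Y x\<bar> < ereal e"
  shows "e2ennreal (Z x) \<le> e2ennreal (Y x) + ennreal e" "e2ennreal (Y x) \<le> e2ennreal (Z x) + ennreal e"
proof -
  define a where "a = real_of_ereal (Y x)"
  have ya: "Y x = ereal a" "0 \<le> a" using W_fin[OF Y, of x] unfolding a_def by auto
  have z0: "0 \<le> Z x" by (rule nyw_nonneg[OF Z])
  obtain z where z: "Z x = ereal z" "0 \<le> z" "\<bar>z - a\<bar> < e"
    using c z0 ya by (cases "Z x") auto
  have e0: "0 \<le> e" using z(3) by linarith
  show "e2ennreal (Z x) \<le> e2ennreal (Y x) + ennreal e"
    using z ya e0 by (simp flip: ennreal_plus)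
  show "e2ennreal (Y x) \<le> e2ennreal (Z x) + ennreal e"
    using z ya e0 by (simp flip: ennreal_plus)
qed

locale bsetting =
  fixes M :: "'a measure" and f :: "'a \<Rightarrow> real" and B :: real
  assumes sp: "emeasure M (space M) = 1"
    and fm: "f \<in> borel_measurable M"
    and Bpos: "B > 0"
    and fB: "\<And>x. x \<in> space M \<Longrightarrow> \<bar>f x\<bar> \<le> B"
begin

definition Phi :: "(real \<Rightarrow> ereal) \<Rightarrow> real \<Rightarrow> ennreal" where
  "Phi Z r = (\<integral>\<^sup>+ x. e2ennreal (Z (f x / r)) \<partial>M)"

definition SS :: "(real \<Rightarrow> ereal) \<Rightarrow> real set" where
  "SS Z = {r. r > 0 \<and> Phi Z r \<le> e2ennreal (Z 1)}"

lemma norm_eq: "orlicz_norm Z M f = Inf (SS Z)"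
  unfolding orlicz_norm_def SS_def Phi_def ..

lemma Phi_meas:
  assumes Z: "normalized_young_weight Z"
  shows "(\<lambda>x. e2ennreal (Z (f x / r))) \<in> borel_measurable M"
proof -
  have "(\<lambda>x. f x / r) \<in> borel_measurable M" using fm by measurable
  hence "(\<lambda>x. Z (f x / r)) \<in> borel_measurable M"
    using measurable_compose nyw_meas[OF Z] by blast
  thus ?thesis by measurable
qed

lemma int_const: "(\<integral>\<^sup>+ x. c \<partial>M) = c"
  using sp by simp

lemma Phi_bound:
  assumes Z: "normalized_young_weight Z" and r: "r > 0"
  shows "Phi Z r \<le> e2ennreal (Z (B / r))"
proof -
  have "Phi Z r \<le> (\<integral>\<^sup>+ x. e2ennreal (Z (B / r)) \<partial>M)"
    unfolding Phi_def
  proof (rule nn_integral_mono)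
    fix x assume "x \<in> space M"
    hence "\<bar>f x / r\<bar> \<le> \<bar>B / r\<bar>" using fB r Bpos by (auto simp: divide_right_mono abs_div)
    thus "e2ennreal (Z (f x / r)) \<le> e2ennreal (Z (B / r))"
      by (intro e2ennreal_mono nyw_mono_abs[OF Z])
  qed
  thus ?thesis by (simp only: int_const)
qed

lemma Phi_mono:
  assumes Z: "normalized_young_weight Z" and sr: "0 < s" "s \<le> r"
  shows "Phi Z r \<le> Phi Z s"
  unfolding Phi_def
proof (rule nn_integral_mono)
  fix x
  have "\<bar>f x / r\<bar> \<le> \<bar>f x / s\<bar>" using sr
    by (simp add: abs_div frac_le)
  thus "e2ennreal (Z (f x / r)) \<le> e2ennreal (Z (f x / s))"
    by (intro e2ennreal_mono nyw_mono_abs[OF Z])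
qed

lemma B_in_SS:
  assumes Z: "normalized_young_weight Z"
  shows "B \<in> SS Z"
  using Phi_bound[OF Z Bpos] Bpos unfolding SS_def by simp

lemma SS_ne: "normalized_young_weight Z \<Longrightarrow> SS Z \<noteq> {}"
  using B_in_SS by blast

lemma SS_bdd: "bdd_below (SS Z)"
  unfolding SS_def bdd_below_def by (auto intro!: exI[of _ 0])

lemma norm_nonneg: "normalized_young_weight Z \<Longrightarrow> 0 \<le> Inf (SS Z)"
  by (rule cInf_greatest[OF SS_ne]) (auto simp: SS_def)

lemma orlicz_in:
  assumes Z: "normalized_young_weight Z"
  shows "in_orlicz Z M f"
proof -
  have "(\<integral>\<^sup>+ x. e2ennreal (Z ((1/B) * f x)) \<partial>M) = Phi Z B" unfolding Phi_def by simp
  also have "\<dots> \<le> e2ennreal (Z 1)" using Phi_bound[OF Z Bpos] Bpos by simp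
  also have "\<dots> < \<infinity>" using nyw_one_fin[OF Z] by (metis e2ennreal_ereal ennreal_less_top infinity_ennreal_def)
  finally show ?thesis unfolding in_orlicz_def using fm Bpos by (intro conjI exI[of _ "1/B"]) auto
qed

end


context bsetting begin

lemma Phi_fin:
  assumes Y: "Y \<in> W_plus p" and r: "r > 0"
  shows "Phi Y r = ennreal (enn2real (Phi Y r))"
proof -
  have Z: "normalized_young_weight Y" using Y unfolding W_plus_def by auto
  have "Phi Y r \<le> e2ennreal (Y (B / r))" by (rule Phi_bound[OF Z r])
  also have "\<dots> = ennreal (real_of_ereal (Y (B/r)))" using W_fin(1)[OF Y, of "B/r"]
    by (metis e2ennreal_ereal)
  finally have "Phi Y r < top" using ennreal_less_top le_less_trans by blast
  thus ?thesis by (simp add: ennreal_enn2real_if)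
qed

lemma approx:
  assumes Y: "Y \<in> W_plus p" and Ys: "\<And>k. normalized_young_weight (Ys k)"
    and uc: "unif_conv_compact Ys Y" and r: "r > 0" and e: "e > 0"
  shows "\<forall>\<^sub>F k in sequentially. Phi (Ys k) r \<le> Phi Y r + ennreal e \<and>
           Phi Y r \<le> Phi (Ys k) r + ennreal e \<and> \<bar>Ys k 1 - Y 1\<bar> < ereal e"
proof -
  define K where "K = cball (0::real) (B/r + 1)"
  have "compact K" unfolding K_def by simp
  hence ev: "\<forall>\<^sub>F k in sequentially. \<forall>x\<in>K. \<bar>Ys k x - Y x\<bar> < ereal e"
    using uc e unfolding unif_conv_compact_def by blast
  have Z: "normalized_young_weight Y" using Y unfolding W_plus_def by auto
  have fK: "f x / r \<in> K" if "x \<in> space M" for x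
  proof -
    have "\<bar>f x / r\<bar> \<le> B / r" using fB[OF that] r by (simp add: abs_div divide_right_mono)
    thus ?thesis unfolding K_def by simp
  qed
  have oK: "1 \<in> K" unfolding K_def using Bpos r by simp
  show ?thesis
  proof (rule eventually_mono[OF ev], intro conjI)
    fix k assume H: "\<forall>x\<in>K. \<bar>Ys k x - Y x\<bar> < ereal e"
    show "\<bar>Ys k 1 - Y 1\<bar> < ereal e" using H oK by blast
    have "Phi (Ys k) r \<le> (\<integral>\<^sup>+ x. e2ennreal (Y (f x / r)) + ennreal e \<partial>M)"
      unfolding Phi_def by (rule nn_integral_mono) (use ptw_close(1)[OF Ys Y] H fK in blast)
    also have "\<dots> = Phi Y r + ennreal e"
      unfolding Phi_def by (simp add: nn_integral_add Phi_meas[OF Z] sp)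
    finally show "Phi (Ys k) r \<le> Phi Y r + ennreal e" .
    have "Phi Y r \<le> (\<integral>\<^sup>+ x. e2ennreal (Ys k (f x / r)) + ennreal e \<partial>M)"
      unfolding Phi_def by (rule nn_integral_mono) (use ptw_close(2)[OF Ys Y] H fK in blast)
    also have "\<dots> = Phi (Ys k) r + ennreal e"
      unfolding Phi_def by (simp add: nn_integral_add Phi_meas[OF Ys] sp)
    finally show "Phi Y r \<le> Phi (Ys k) r + ennreal e" .
  qed
qed

lemma one_close:
  assumes Y: "Y \<in> W_plus p" and Z: "normalized_young_weight Z" and c: "\<bar>Z 1 - Y 1\<bar> < ereal e"
  shows "\<bar>real_of_ereal (Z 1) - real_of_ereal (Y 1)\<bar> < e"
proof -
  have "Z 1 - Y 1 = ereal (real_of_ereal (Z 1) - real_of_ereal (Y 1))"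
    using nyw_one_fin(1)[OF Z] W_fin(1)[OF Y, of 1] by (metis ereal_minus(1))
  thus ?thesis using c by simp
qed

lemma lower:
  assumes Y: "Y \<in> W_plus p" and Ys: "\<And>k. normalized_young_weight (Ys k)"
    and uc: "unif_conv_compact Ys Y" and r: "r > 0" and gt: "Phi Y r > e2ennreal (Y 1)"
  shows "\<forall>\<^sub>F k in sequentially. \<forall>s\<in>SS (Ys k). r < s"
proof -
  define c where "c = real_of_ereal (Y 1)"
  define ph where "ph = enn2real (Phi Y r)"
  have c0: "c > 0" unfolding c_def by (rule W_one_pos[OF Y])
  have Yc: "e2ennreal (Y 1) = ennreal c" using W_fin(1)[OF Y, of 1] unfolding c_def by (metis e2ennreal_ereal)
  have Pph: "Phi Y r = ennreal ph" unfolding ph_def by (rule Phi_fin[OF Y r])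
  have "c < ph" using gt c0 unfolding Yc Pph by (simp add: ennreal_less_iff)
  define e where "e = (ph - c) / 3"
  have e: "e > 0" using \<open>c < ph\<close> by (simp add: e_def)
  show ?thesis
  proof (rule eventually_mono[OF approx[OF Y Ys uc r e]], intro ballI)
    fix k s
    assume H: "Phi (Ys k) r \<le> Phi Y r + ennreal e \<and> Phi Y r \<le> Phi (Ys k) r + ennreal e \<and> \<bar>Ys k 1 - Y 1\<bar> < ereal e"
      and s: "s \<in> SS (Ys k)"
    define z where "z = real_of_ereal (Ys k 1)"
    have z: "\<bar>z - c\<bar> < e" unfolding z_def c_def using one_close[OF Y Ys] H by blast
    hence zz: "c - e < z" "z < c + e" by (auto simp: abs_less_iff)
    have z0: "0 \<le> z" unfolding z_def by (rule nyw_one_fin(2)[OF Ys])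
    have Yz: "e2ennreal (Ys k 1) = ennreal z" using nyw_one_fin(1)[OF Ys, of k] unfolding z_def by (metis e2ennreal_ereal)
    show "r < s"
    proof (rule ccontr)
      assume "\<not> r < s"
      hence "s \<le> r" by simp
      have s0: "s > 0" and sS: "Phi (Ys k) s \<le> ennreal z" using s Yz unfolding SS_def by auto
      have "ennreal ph \<le> Phi (Ys k) r + ennreal e" using H Pph by simp
      also have "\<dots> \<le> Phi (Ys k) s + ennreal e" using Phi_mono[OF Ys s0 \<open>s \<le> r\<close>] by (simp add: add_right_mono)
      also have "\<dots> \<le> ennreal z + ennreal e" using sS by (simp add: add_right_mono)
      also have "\<dots> = ennreal (z + e)" using z0 e by simp
      finally have "ennreal ph \<le> ennreal (z + e)" .
      hence "ph \<le> z + e" using ennreal_le_iff[of "z+e" ph] z0 e by simp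
      moreover have "3 * e = ph - c" unfolding e_def by simp
      ultimately show False using zz \<open>c < ph\<close> by linarith
    qed
  qed
qed

lemma upper:
  assumes Y: "Y \<in> W_plus p" and Ys: "\<And>k. normalized_young_weight (Ys k)"
    and uc: "unif_conv_compact Ys Y" and r: "r > 0" and lt: "Phi Y r < e2ennreal (Y 1)"
  shows "\<forall>\<^sub>F k in sequentially. r \<in> SS (Ys k)"
proof -
  define c where "c = real_of_ereal (Y 1)"
  define ph where "ph = enn2real (Phi Y r)"
  have Yc: "e2ennreal (Y 1) = ennreal c" using W_fin(1)[OF Y, of 1] unfolding c_def by (metis e2ennreal_ereal)
  have Pph: "Phi Y r = ennreal ph" unfolding ph_def by (rule Phi_fin[OF Y r])
  have ph0: "0 \<le> ph" unfolding ph_def by simp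
  have "ph < c" using lt ph0 unfolding Yc Pph by (simp add: ennreal_less_iff)
  define e where "e = (c - ph) / 3"
  have e: "e > 0" using \<open>ph < c\<close> by (simp add: e_def)
  show ?thesis
  proof (rule eventually_mono[OF approx[OF Y Ys uc r e]])
    fix k
    assume H: "Phi (Ys k) r \<le> Phi Y r + ennreal e \<and> Phi Y r \<le> Phi (Ys k) r + ennreal e \<and> \<bar>Ys k 1 - Y 1\<bar> < ereal e"
    define z where "z = real_of_ereal (Ys k 1)"
    have z: "\<bar>z - c\<bar> < e" unfolding z_def c_def using one_close[OF Y Ys] H by blast
    hence zz: "c - e < z" "z < c + e" by (auto simp: abs_less_iff)
    have Yz: "e2ennreal (Ys k 1) = ennreal z" using nyw_one_fin(1)[OF Ys, of k] unfolding z_def by (metis e2ennreal_ereal)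
    have "Phi (Ys k) r \<le> ennreal ph + ennreal e" using H Pph by simp
    also have "\<dots> = ennreal (ph + e)" using ph0 e by simp
    also have "\<dots> \<le> ennreal z" proof (intro ennreal_leI)
      have "3 * e = c - ph" unfolding e_def by simp
      thus "ph + e \<le> z" using zz \<open>ph < c\<close> by linarith
    qed
    finally show "r \<in> SS (Ys k)" using r Yz unfolding SS_def by simp
  qed
qed

lemma strict:
  assumes Y: "Y \<in> W_plus p" and p: "p \<ge> 1" and r: "0 < r'" "r' < r"
    and nz: "\<not> (AE x in M. f x = 0)"
  shows "Phi Y r < Phi Y r'"
proof -
  have Z: "normalized_young_weight Y" using Y unfolding W_plus_def by auto
  have r0: "r > 0" using r by simp
  define y where "y = (\<lambda>x. real_of_ereal (Y x))"
  have e: "\<And>u. Y u = ereal (y u)" using W_fin(1)[OF Y] unfolding y_def by blast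
  have y0: "\<And>u. 0 \<le> y u" using W_fin(2)[OF Y] unfolding y_def by blast
  show ?thesis unfolding Phi_def
  proof (rule nn_integral_less[OF Phi_meas[OF Z] Phi_meas[OF Z]])
    show "(\<integral>\<^sup>+ x. e2ennreal (Y (f x / r)) \<partial>M) \<noteq> \<infinity>"
      using Phi_fin[OF Y r0] unfolding Phi_def by (metis ennreal_neq_top infinity_ennreal_def)
    show "AE x in M. e2ennreal (Y (f x / r)) \<le> e2ennreal (Y (f x / r'))"
    proof (rule AE_I2)
      fix x
      have "\<bar>f x / r\<bar> \<le> \<bar>f x / r'\<bar>" using r by (simp add: abs_div frac_le)
      thus "e2ennreal (Y (f x / r)) \<le> e2ennreal (Y (f x / r'))"
        by (intro e2ennreal_mono nyw_mono_abs[OF Z])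
    qed
    show "\<not> (AE x in M. e2ennreal (Y (f x / r')) \<le> e2ennreal (Y (f x / r)))"
    proof
      assume "AE x in M. e2ennreal (Y (f x / r')) \<le> e2ennreal (Y (f x / r))"
      hence "AE x in M. f x = 0"
      proof (rule AE_mp[OF _ AE_I2], intro impI)
        fix x assume le: "e2ennreal (Y (f x / r')) \<le> e2ennreal (Y (f x / r))"
        show "f x = 0"
        proof (rule ccontr)
          assume "f x \<noteq> 0"
          hence "\<bar>f x / r\<bar> < \<bar>f x / r'\<bar>" using r by (simp add: abs_div divide_strict_left_mono)
          hence "y \<bar>f x / r\<bar> < y \<bar>f x / r'\<bar>" unfolding y_def by (intro W_strict[OF Y p]) auto
          hence "y (f x / r) < y (f x / r')" using nyw_abs[OF Z] unfolding y_def by metis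
          hence "ennreal (y (f x / r)) < ennreal (y (f x / r'))" using y0 by (simp add: ennreal_less_iff)
          thus False using le by (simp add: e)
        qed
      qed
      thus False using nz by blast
    qed
  qed
qed

lemma Phi_zero:
  assumes Z: "normalized_young_weight Z" and z: "AE x in M. f x = 0"
  shows "Phi Z r = 0"
proof -
  have "Phi Z r = (\<integral>\<^sup>+ x. 0 \<partial>M)" unfolding Phi_def
  proof (rule nn_integral_cong_AE)
    have Z0: "Z 0 = 0" using Z unfolding normalized_young_weight_def by blast
    show "AE x in M. e2ennreal (Z (f x / r)) = 0" using z by eventually_elim (simp add: Z0)
  qed
  thus ?thesis by simp
qed

end


context bsetting begin

lemma conv:
  assumes Y: "Y \<in> W_plus p" and p: "p \<ge> 1" and Ys: "\<And>k. normalized_young_weight (Ys k)"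
    and uc: "unif_conv_compact Ys Y"
  shows "(\<lambda>k. Inf (SS (Ys k))) \<longlonglongrightarrow> Inf (SS Y)"
proof (rule order_tendstoI)
  have Z: "normalized_young_weight Y" using Y unfolding W_plus_def by auto
  define N where "N = Inf (SS Y)"
  have N0: "0 \<le> N" unfolding N_def by (rule norm_nonneg[OF Z])
  have Yc: "e2ennreal (Y 1) = ennreal (real_of_ereal (Y 1))" using W_fin(1)[OF Y, of 1] by (metis e2ennreal_ereal)
  have c0: "real_of_ereal (Y 1) > 0" by (rule W_one_pos[OF Y])
  {
    fix a assume a: "a < Inf (SS Y)"
    show "\<forall>\<^sub>F k in sequentially. a < Inf (SS (Ys k))"
    proof (cases "a < 0")
      case True
      show ?thesis using norm_nonneg[OF Ys] True by (intro always_eventually) (auto intro: less_le_trans)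
    next
      case False
      define r where "r = (a + N) / 2"
      have r: "0 < r" "r < N" "a < r" using False a unfolding r_def N_def by auto
      have "Phi Y r > e2ennreal (Y 1)"
      proof (rule ccontr)
        assume "\<not> ?thesis"
        hence "r \<in> SS Y" using r unfolding SS_def by auto
        hence "N \<le> r" unfolding N_def by (rule cInf_lower[OF _ SS_bdd])
        thus False using r by simp
      qed
      from lower[OF Y Ys uc r(1) this] show ?thesis
      proof (rule eventually_mono)
        fix k assume "\<forall>s\<in>SS (Ys k). r < s"
        hence "r \<le> Inf (SS (Ys k))" by (intro cInf_greatest[OF SS_ne[OF Ys]]) auto
        thus "a < Inf (SS (Ys k))" using r by simp
      qed
    qed
  }
  {
    fix a assume a: "Inf (SS Y) < a"
    define r' where "r' = N + (a - N) / 3"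
    define r where "r = N + 2 * (a - N) / 3"
    have r: "0 < r'" "r' < r" "r < a" "N < r'" using a N0 unfolding r_def r'_def N_def by (auto simp: field_simps)
    obtain s where s: "s \<in> SS Y" "s < r'" using cInf_lessD[OF SS_ne[OF Z]] r(4) unfolding N_def by blast
    have s0: "0 < s" and sS: "Phi Y s \<le> e2ennreal (Y 1)" using s unfolding SS_def by auto
    have "Phi Y r' \<le> Phi Y s" using Phi_mono[OF Z s0] s by simp
    hence le: "Phi Y r' \<le> e2ennreal (Y 1)" using sS by simp
    have lt: "Phi Y r < e2ennreal (Y 1)"
    proof (cases "AE x in M. f x = 0")
      case True
      thus ?thesis using Phi_zero[OF Z True, of r] Yc c0 by simp
    next
      case False
      show ?thesis using strict[OF Y p r(1,2) False] le by simp
    qed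
    from upper[OF Y Ys uc _ lt] r show "\<forall>\<^sub>F k in sequentially. Inf (SS (Ys k)) < a"
    proof (intro eventually_mono[OF upper[OF Y Ys uc _ lt]])
      show "0 < r" using r by simp
      fix k assume "r \<in> SS (Ys k)"
      hence "Inf (SS (Ys k)) \<le> r" by (rule cInf_lower[OF _ SS_bdd])
      thus "Inf (SS (Ys k)) < a" using r by simp
    qed
  }
qed

end

theorem proposition1p6:
  fixes M :: "'a measure" and p :: real and Y :: "real \<Rightarrow> ereal"
    and Ys :: "nat \<Rightarrow> real \<Rightarrow> ereal" and f :: "'a \<Rightarrow> real"
  assumes "emeasure M (space M) = 1"
    and "p \<ge> 1"
    and "Y \<in> W_plus p"
    and "\<And>k. normalized_young_weight (Ys k)"
    and "unif_conv_compact Ys Y"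
    and "f \<in> borel_measurable M"
    and "\<exists>B. \<forall>x\<in>space M. \<bar>f x\<bar> \<le> B"
  shows "in_orlicz Y M f \<and> (\<forall>k. in_orlicz (Ys k) M f) \<and>
         (\<lambda>k. orlicz_norm (Ys k) M f) \<longlonglongrightarrow> orlicz_norm Y M f"
proof -
  obtain B0 where B0: "\<forall>x\<in>space M. \<bar>f x\<bar> \<le> B0" using assms(7) by blast
  interpret bsetting M f "\<bar>B0\<bar> + 1"
    by unfold_locales (use assms(1,6) B0 in force)+
  have Z: "normalized_young_weight Y" using assms(3) unfolding W_plus_def by auto
  show ?thesis
    using orlicz_in[OF Z] orlicz_in[OF assms(4)] conv[OF assms(3,2,4,5)]
    unfolding norm_eq by blast
qed

end
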